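(* Let $(\Omega,\mathcal A)$ be a Borel space, $(X_\omega,d_\omega)_{\omega\in\Omega}$ a field of metric spaces, and $\mathcal L\subseteq\mathcal S(\Omega,X_\bullet)$ a set of sections satisfying: (a) $\omega\mapsto d_\omega(x_\omega,y_\omega)$ is Borel for all $x_\bullet,y_\bullet\in\mathcal L$, and (c) there is a countable family $\{x^n_\bullet\}_{n\ge1}\subseteq\mathcal L$ with $\{x^n_\omega\}_n$ dense in $X_\omega$ for every $\omega$. Then the following are equivalent: (b) if $y_\bullet\in\mathcal S(\Omega,X_\bullet)$ is such that $\omega\mapsto d_\omega(x_\omega,y_\omega)$ is Borel for all $x_\bullet\in\mathcal L$, then $y_\bullet\in\mathcal L$; (b') $\mathcal L$ is closed under pointwise limits and countable Borel gluings; (b'') $\mathcal L$ is closed under pointwise limits and finite Borel gluings.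
   Context: A section is a family $x_\bullet=(x_\omega)_{\omega\in\Omega}$ with $x_\omega\in X_\omega$; $\mathcal S(\Omega,X_\bullet)$ is the set of sections. If $(x^n_\bullet)_{n\ge1}$ are sections such that $(x^n_\omega)_n$ converges in $X_\omega$ for every $\omega$, the pointwise limit is the section $\omega\mapsto\lim_n x^n_\omega$. If $(x^n_\bullet)$ are sections and $\Omega=\bigsqcup_n\Omega_n$ is a countable (resp. finite) partition into Borel sets, the countable (resp. finite) Borel gluing is the section $x_\bullet$ with $x_\omega=x^n_\omega$ for $\omega\in\Omega_n$. *)

theory Defs
  imports "HOL-Analysis.Analysis" "HOL-Probability.Probability"
begin

definition sections :: "'w measure \<Rightarrow> ('w \<Rightarrow> 'a set) \<Rightarrow> ('w \<Rightarrow> 'a) set" where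
  "sections M X = Pi\<^sub>E (space M) X"

definition closed_under_pointwise_limits ::
  "'w measure \<Rightarrow> ('w \<Rightarrow> 'a set) \<Rightarrow> ('w \<Rightarrow> 'a \<Rightarrow> 'a \<Rightarrow> real) \<Rightarrow> ('w \<Rightarrow> 'a) set \<Rightarrow> bool" where
  "closed_under_pointwise_limits M X d L \<longleftrightarrow>
     (\<forall>xs y. (\<forall>n. xs n \<in> L) \<and> y \<in> sections M X \<and>
        (\<forall>w\<in>space M. limitin (Metric_space.mtopology (X w) (d w)) (\<lambda>n. xs n w) (y w) sequentially)
        \<longrightarrow> y \<in> L)"

definition closed_under_countable_gluing ::
  "'w measure \<Rightarrow> ('w \<Rightarrow> 'a set) \<Rightarrow> ('w \<Rightarrow> 'a) set \<Rightarrow> bool" where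
  "closed_under_countable_gluing M X L \<longleftrightarrow>
     (\<forall>(xs :: nat \<Rightarrow> 'w \<Rightarrow> 'a) P y. (\<forall>n. xs n \<in> L) \<and> (\<forall>n. P n \<in> sets M) \<and> disjoint_family P
        \<and> (\<Union>n. P n) = space M \<and> y \<in> sections M X \<and> (\<forall>n. \<forall>w\<in>P n. y w = xs n w)
        \<longrightarrow> y \<in> L)"

definition closed_under_finite_gluing ::
  "'w measure \<Rightarrow> ('w \<Rightarrow> 'a set) \<Rightarrow> ('w \<Rightarrow> 'a) set \<Rightarrow> bool" where
  "closed_under_finite_gluing M X L \<longleftrightarrow>
     (\<forall>(N :: nat) (xs :: nat \<Rightarrow> 'w \<Rightarrow> 'a) P y. (\<forall>n<N. xs n \<in> L) \<and> (\<forall>n<N. P n \<in> sets M)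
        \<and> disjoint_family_on P {..<N}
        \<and> (\<Union>n<N. P n) = space M \<and> y \<in> sections M X \<and> (\<forall>n<N. \<forall>w\<in>P n. y w = xs n w)
        \<longrightarrow> y \<in> L)"

end

theory Submission
  imports Defs
begin

lemma (in Metric_space) limitin_dist_tendsto:
  assumes lim: "limitin mtopology f l sequentially" and a: "a \<in> M"
  shows "(\<lambda>i. d a (f i)) \<longlonglongrightarrow> d a l"
proof (rule LIMSEQ_I)
  fix r :: real assume r: "0 < r"
  from lim have lM: "l \<in> M" and ev: "eventually (\<lambda>x. f x \<in> M \<and> d (f x) l < r) sequentially"
    using r by (auto simp: limitin_metric)
  then obtain N where N: "\<And>n. n \<ge> N \<Longrightarrow> f n \<in> M \<and> d (f n) l < r"
    by (auto simp: eventually_sequentially)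
  show "\<exists>no. \<forall>n\<ge>no. norm (d a (f n) - d a l) < r"
  proof (intro exI allI impI)
    fix n assume "N \<le> n"
    with N have fn: "f n \<in> M" "d (f n) l < r" by auto
    have "d a (f n) \<le> d a l + d l (f n)" using triangle[OF a lM fn(1)] .
    moreover have "d a l \<le> d a (f n) + d (f n) l" using triangle[OF a fn(1) lM] .
    moreover have "d l (f n) = d (f n) l" using commute by simp
    ultimately show "norm (d a (f n) - d a l) < r" using fn(2) by auto
  qed
qed

theorem mainTheorem2:
  fixes M :: "'w measure" and X :: "'w \<Rightarrow> 'a set" and d :: "'w \<Rightarrow> 'a \<Rightarrow> 'a \<Rightarrow> real"
    and L :: "('w \<Rightarrow> 'a) set" and xs :: "nat \<Rightarrow> 'w \<Rightarrow> 'a"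
  assumes metric: "\<And>w. w \<in> space M \<Longrightarrow> Metric_space (X w) (d w)"
    and L_sub: "L \<subseteq> sections M X"
    and a: "\<And>x y. x \<in> L \<Longrightarrow> y \<in> L \<Longrightarrow> (\<lambda>w. d w (x w) (y w)) \<in> borel_measurable M"
    and c_L: "\<And>n. xs n \<in> L"
    and c_dense: "\<And>w. w \<in> space M \<Longrightarrow>
        Metric_space.mtopology (X w) (d w) closure_of (range (\<lambda>n. xs n w)) = X w"
  shows "((\<forall>y\<in>sections M X. (\<forall>x\<in>L. (\<lambda>w. d w (x w) (y w)) \<in> borel_measurable M) \<longrightarrow> y \<in> L)
           \<longleftrightarrow> (closed_under_pointwise_limits M X d L \<and> closed_under_countable_gluing M X L))
       \<and> ((closed_under_pointwise_limits M X d L \<and> closed_under_countable_gluing M X L)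
           \<longleftrightarrow> (closed_under_pointwise_limits M X d L \<and> closed_under_finite_gluing M X L))"
proof -
  let ?B = "\<forall>y\<in>sections M X. (\<forall>x\<in>L. (\<lambda>w. d w (x w) (y w)) \<in> borel_measurable M) \<longrightarrow> y \<in> L"
  have secI: "x w \<in> X w" if "x \<in> L" "w \<in> space M" for x w
    using L_sub that by (auto simp: sections_def)
  have B_lim: "closed_under_pointwise_limits M X d L" if B: ?B
    unfolding closed_under_pointwise_limits_def
  proof (intro allI impI, elim conjE)
    fix zs y assume zs: "\<forall>n. zs n \<in> L" and y: "y \<in> sections M X"
      and lim: "\<forall>w\<in>space M. limitin (Metric_space.mtopology (X w) (d w)) (\<lambda>n. zs n w) (y w) sequentially"
    show "y \<in> L"
    proof (rule B[rule_format, OF y])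
      fix x assume x: "x \<in> L"
      show "(\<lambda>w. d w (x w) (y w)) \<in> borel_measurable M"
      proof (rule borel_measurable_LIMSEQ_real[where u="\<lambda>i w. d w (x w) (zs i w)"])
        fix w assume w: "w \<in> space M"
        show "(\<lambda>i. d w (x w) (zs i w)) \<longlonglongrightarrow> d w (x w) (y w)"
          using Metric_space.limitin_dist_tendsto[OF metric[OF w] lim[rule_format, OF w] secI[OF x w]] .
      next
        fix i show "(\<lambda>w. d w (x w) (zs i w)) \<in> borel_measurable M"
          using a[OF x] zs by auto
      qed
    qed
  qed
  have B_glue: "closed_under_countable_gluing M X L" if B: ?B
    unfolding closed_under_countable_gluing_def
  proof (intro allI impI, elim conjE)
    fix zs :: "nat \<Rightarrow> 'w \<Rightarrow> 'a" and P y
    assume zs: "\<forall>n. zs n \<in> L" and P: "\<forall>n. P n \<in> sets M" and "disjoint_family P"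
      and U: "(\<Union>n. P n) = space M" and y: "y \<in> sections M X" and eq: "\<forall>n. \<forall>w\<in>P n. y w = zs n w"
    show "y \<in> L"
    proof (rule B[rule_format, OF y])
      fix x assume x: "x \<in> L"
      show "(\<lambda>w. d w (x w) (y w)) \<in> borel_measurable M"
      proof (rule measurable_piecewise_restrict2[where A=P])
        show "\<And>n. P n \<in> sets M" using P by auto
        show "space M = (\<Union>n. P n)" using U by auto
        fix n
        show "\<exists>h\<in>borel_measurable M. \<forall>w\<in>P n. d w (x w) (y w) = h w"
          using a[OF x, of "zs n"] zs eq by auto
      qed
    qed
  qed
  have glue_fin: "closed_under_finite_gluing M X L" if G: "closed_under_countable_gluing M X L"
    unfolding closed_under_finite_gluing_def
  proof (intro allI impI, elim conjE)
    fix N :: nat and zs :: "nat \<Rightarrow> 'w \<Rightarrow> 'a" and P y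
    assume zs: "\<forall>n<N. zs n \<in> L" and P: "\<forall>n<N. P n \<in> sets M" and dj: "disjoint_family_on P {..<N}"
      and U: "(\<Union>n<N. P n) = space M" and y: "y \<in> sections M X" and eq: "\<forall>n<N. \<forall>w\<in>P n. y w = zs n w"
    define zs' where "zs' n = (if n < N then zs n else xs 0)" for n
    define P' where "P' n = (if n < N then P n else {})" for n
    show "y \<in> L"
    proof (rule G[unfolded closed_under_countable_gluing_def, rule_format, of zs' P'], intro conjI)
      show "\<forall>n. zs' n \<in> L" using zs c_L by (auto simp: zs'_def)
      show "\<forall>n. P' n \<in> sets M" using P by (auto simp: P'_def)
      show "disjoint_family P'" using dj
        by (auto simp: P'_def disjoint_family_on_def)
      show "(\<Union>n. P' n) = space M" using U by (auto simp: P'_def)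
      show "y \<in> sections M X" by fact
      show "\<forall>n. \<forall>w\<in>P' n. y w = zs' n w" using eq by (auto simp: P'_def zs'_def)
    qed
  qed
  have fin_B: ?B if Lim: "closed_under_pointwise_limits M X d L" and G: "closed_under_finite_gluing M X L"
  proof (intro ballI impI)
    fix y assume y: "y \<in> sections M X" and ymeas: "\<forall>x\<in>L. (\<lambda>w. d w (x w) (y w)) \<in> borel_measurable M"
    have yX: "y w \<in> X w" if "w \<in> space M" for w using y that by (auto simp: sections_def)
    define f where "f m w = d w (xs m w) (y w)" for m w
    have fm[measurable]: "f m \<in> borel_measurable M" for m
      using ymeas c_L unfolding f_def by auto
    define minz where "minz N w n \<longleftrightarrow> n < N \<and> (\<forall>m<N. f n w \<le> f m w)" for N w n
    define idx where "idx N w = (LEAST n. minz N w n)" for N w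
    define z where "z N w = (if w \<in> space M then xs (idx N w) w else undefined)" for N w
    define Pset where "Pset N n = {w \<in> space M. n < N \<and> (\<forall>m<N. f n w \<le> f m w) \<and> (\<forall>m<n. f n w < f m w)}" for N n
    have ex: "\<exists>n. minz N w n" if "0 < N" for N w
    proof -
      let ?S = "(\<lambda>m. f m w) ` {..<N}"
      have "finite ?S" "?S \<noteq> {}" using that by auto
      then have "Min ?S \<in> ?S" by (rule Min_in)
      then obtain n where n: "n < N" "f n w = Min ?S" by auto
      have "\<forall>m<N. f n w \<le> f m w" using n \<open>finite ?S\<close> by auto
      then show ?thesis using n by (auto simp: minz_def)
    qed
    have idx_min: "minz N w (idx N w)" if "0 < N" for N w
      unfolding idx_def using ex[OF that] by (rule LeastI_ex)
    have idx_P: "w \<in> Pset N (idx N w)" if "0 < N" "w \<in> space M" for N w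
    proof -
      have m: "minz N w (idx N w)" using idx_min[OF that(1)] .
      have "f (idx N w) w < f m w" if "m < idx N w" for m
      proof (rule ccontr)
        assume "\<not> f (idx N w) w < f m w"
        then have "minz N w m" using m \<open>m < idx N w\<close> by (auto simp: minz_def)
        then have "idx N w \<le> m" unfolding idx_def by (rule Least_le)
        then show False using \<open>m < idx N w\<close> by simp
      qed
      then show ?thesis using m that by (auto simp: Pset_def minz_def)
    qed
    have P_idx: "idx N w = n" if "w \<in> Pset N n" for N w n
      unfolding idx_def
    proof (rule Least_equality)
      show "minz N w n" using that by (auto simp: Pset_def minz_def)
      fix m assume "minz N w m"
      then have m1: "\<forall>k<N. f m w \<le> f k w" and m2: "m < N" by (auto simp: minz_def)
      have n1: "n < N" and n2: "\<forall>k<n. f n w < f k w" using that by (auto simp: Pset_def)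
      show "n \<le> m"
      proof (rule ccontr)
        assume "\<not> n \<le> m"
        then have "m < n" by simp
        then have "f n w < f m w" using n2 by blast
        moreover have "f m w \<le> f n w" using m1 n1 by blast
        ultimately show False by simp
      qed
    qed
    have zL: "z (Suc N) \<in> L" for N
    proof (rule G[unfolded closed_under_finite_gluing_def, rule_format, of "Suc N" xs "Pset (Suc N)"], intro conjI)
      show "\<forall>n<Suc N. xs n \<in> L" using c_L by auto
      show "\<forall>n<Suc N. Pset (Suc N) n \<in> sets M"
        unfolding Pset_def by measurable
      show "disjoint_family_on (Pset (Suc N)) {..<Suc N}"
        unfolding disjoint_family_on_def
      proof (intro ballI impI)
        fix m n :: nat assume "m \<noteq> n"
        show "Pset (Suc N) m \<inter> Pset (Suc N) n = {}"
        proof (rule ccontr)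
          assume "Pset (Suc N) m \<inter> Pset (Suc N) n \<noteq> {}"
          then obtain w where w1: "w \<in> Pset (Suc N) m" and w2: "w \<in> Pset (Suc N) n" by blast
          have "idx (Suc N) w = m" using P_idx[OF w1] .
          moreover have "idx (Suc N) w = n" using P_idx[OF w2] .
          ultimately show False using \<open>m \<noteq> n\<close> by simp
        qed
      qed
      show "(\<Union>n<Suc N. Pset (Suc N) n) = space M"
      proof
        show "(\<Union>n<Suc N. Pset (Suc N) n) \<subseteq> space M"
        proof
          fix w assume "w \<in> (\<Union>n<Suc N. Pset (Suc N) n)"
          then obtain n where "w \<in> Pset (Suc N) n" by blast
          then show "w \<in> space M" unfolding Pset_def by blast
        qed
        show "space M \<subseteq> (\<Union>n<Suc N. Pset (Suc N) n)"
        proof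
          fix w assume w: "w \<in> space M"
          have "w \<in> Pset (Suc N) (idx (Suc N) w)" using idx_P[OF _ w] by simp
          moreover then have "idx (Suc N) w < Suc N" unfolding Pset_def by blast
          ultimately show "w \<in> (\<Union>n<Suc N. Pset (Suc N) n)" by blast
        qed
      qed
      show "z (Suc N) \<in> sections M X"
        using secI[OF c_L] by (auto simp: sections_def z_def PiE_def extensional_def)
      show "\<forall>n<Suc N. \<forall>w\<in>Pset (Suc N) n. z (Suc N) w = xs n w"
        using P_idx by (auto simp: z_def Pset_def)
    qed
    show "y \<in> L"
    proof (rule Lim[unfolded closed_under_pointwise_limits_def, rule_format, of "\<lambda>N. z (Suc N)"], intro conjI)
      show "\<forall>n. z (Suc n) \<in> L" using zL by auto
      show "y \<in> sections M X" by fact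
      show "\<forall>w\<in>space M. limitin (Metric_space.mtopology (X w) (d w)) (\<lambda>n. z (Suc n) w) (y w) sequentially"
      proof
        fix w assume w: "w \<in> space M"
        interpret MS: Metric_space "X w" "d w" by (rule metric[OF w])
        show "limitin MS.mtopology (\<lambda>n. z (Suc n) w) (y w) sequentially"
          unfolding MS.limitin_metric
        proof (intro conjI allI impI)
          show "y w \<in> X w" using yX[OF w] .
          fix e :: real assume e: "0 < e"
          have "y w \<in> MS.mtopology closure_of (range (\<lambda>n. xs n w))" using c_dense[OF w] yX[OF w] by simp
          then obtain n where n: "xs n w \<in> MS.mball (y w) e"
            using e unfolding MS.metric_closure_of by blast
          then have fn: "f n w < e" using MS.commute by (auto simp: f_def)
          show "eventually (\<lambda>N. z (Suc N) w \<in> X w \<and> d w (z (Suc N) w) (y w) < e) sequentially"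
            unfolding eventually_sequentially
          proof (intro exI allI impI)
            fix N assume "n \<le> N"
            have m: "minz (Suc N) w (idx (Suc N) w)" using idx_min by simp
            then have "f (idx (Suc N) w) w \<le> f n w" using \<open>n \<le> N\<close> by (auto simp: minz_def)
            then show "z (Suc N) w \<in> X w \<and> d w (z (Suc N) w) (y w) < e"
              using fn w secI[OF c_L w] by (auto simp: z_def f_def)
          qed
        qed
      qed
    qed
  qed
  show ?thesis using B_lim B_glue glue_fin fin_B by blast
qed

end
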